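(* Let $P_+$ denote the group of piecewise linear homeomorphisms $f:\mathbb{R}\to\mathbb{R}$ such that $f(0)=0$, the set of slopes of $f$ is bounded, and $f$ is the identity near $-\infty$. Let $f\in P_+$ with $\sup_{t\in\mathbb{R}}|f(t)-t|=\infty$. Then there exists a strictly monotone divergent sequence $\{b_n\}$ of real numbers such that at least one of the following holds: (1) $b_n\to+\infty$, $b_{n+1}>3f(b_n)$ for all $n$, and $f(b_n)-b_n\to+\infty$; (2) $b_n\to+\infty$, $b_{n+1}>3f^{-1}(b_n)$ for all $n$, and $f^{-1}(b_n)-b_n\to+\infty$.
   Context: For a piecewise linear homeomorphism $f$ of $\mathbb{R}$, its set of slopes is $\Lambda(f)=\{f'(t): t\in\mathbb{R}\setminus B(f)\}$, where $B(f)$ is the set of break points (points where $f$ is not differentiable). A set $\Lambda\subset\mathbb{R}\setminus\{0\}$ is bounded if there is $M>1$ with $M^{-1}<|\lambda|<M$ for all $\lambda\in\Lambda$. "$f$ is the identity near $-\infty$" means there is $c\in\mathbb{R}$ with $f(t)=t$ for all $t\le c$. The hypothesis $\sup_t|f(t)-t|=\infty$ is equivalent to $[f]\neq[\mathrm{id}]$ in the group $QI(\mathbb{R})$ of quasi-isometries modulo bounded distance. *)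

theory Defs
  imports "HOL-Analysis.Analysis"
begin

definition break_points :: "(real \<Rightarrow> real) \<Rightarrow> real set" where
  "break_points f = {t. \<not> f differentiable (at t)}"

definition pl_homeo :: "(real \<Rightarrow> real) \<Rightarrow> bool" where
  "pl_homeo f \<longleftrightarrow>
     (\<exists>g. homeomorphism UNIV UNIV f g) \<and>
     (\<forall>a b. finite (break_points f \<inter> {a..b})) \<and>
     (\<forall>t. t \<notin> break_points f \<longrightarrow>
        (\<exists>e>0. \<exists>m c. \<forall>s\<in>ball t e. f s = m * s + c))"

definition slopes :: "(real \<Rightarrow> real) \<Rightarrow> real set" where
  "slopes f = {deriv f t | t. t \<notin> break_points f}"

definition bounded_slopes :: "real set \<Rightarrow> bool" where
  "bounded_slopes S \<longleftrightarrow> (\<exists>M>1. \<forall>x\<in>S. inverse M < \<bar>x\<bar> \<and> \<bar>x\<bar> < M)"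

definition id_near_minus_infty :: "(real \<Rightarrow> real) \<Rightarrow> bool" where
  "id_near_minus_infty f \<longleftrightarrow> (\<exists>c. \<forall>t\<le>c. f t = t)"

definition P_plus :: "(real \<Rightarrow> real) set" where
  "P_plus = {f. pl_homeo f \<and> f 0 = 0 \<and> bounded_slopes (slopes f) \<and> id_near_minus_infty f}"

end

theory Submission
  imports Defs
begin

lemma step_exists:
  fixes h :: "real \<Rightarrow> real"
  assumes hc: "continuous_on UNIV h" and hid: "\<forall>t\<le>c. h t = t"
    and unb: "\<not> (\<exists>C. \<forall>t. h t - t \<le> C)"
  shows "\<exists>t>K. h t - t > N"
proof -
  have "continuous_on {c..K} (\<lambda>t. h t - t)"
    by (intro continuous_intros continuous_on_subset[OF hc]) auto
  then have "compact ((\<lambda>t. h t - t) ` {c..K})"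
    by (intro compact_continuous_image) auto
  then obtain B where B: "\<forall>x\<in>(\<lambda>t. h t - t) ` {c..K}. norm x \<le> B"
    using compact_imp_bounded bounded_iff by blast
  from unb obtain t where t: "h t - t > max N (max B 0)"
    by (metis not_le)
  have "t > K"
  proof (rule ccontr)
    assume "\<not> t > K"
    show False
    proof (cases "t \<le> c")
      case True then show False using hid t by auto
    next
      case False
      then have "t \<in> {c..K}" using \<open>\<not> t > K\<close> by auto
      then have "\<bar>h t - t\<bar> \<le> B" using B by auto
      then show False using t by auto
    qed
  qed
  then show ?thesis using t by auto
qed

lemma seq_exists:
  fixes h :: "real \<Rightarrow> real"
  assumes hc: "continuous_on UNIV h" and hid: "\<forall>t\<le>c. h t = t"
    and unb: "\<not> (\<exists>C. \<forall>t. h t - t \<le> C)"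
  shows "\<exists>b :: nat \<Rightarrow> real. strict_mono b \<and> filterlim b at_top sequentially \<and>
     (\<forall>n. b (Suc n) > 3 * h (b n)) \<and> filterlim (\<lambda>n. h (b n) - b n) at_top sequentially"
proof -
  have "\<forall>K. \<forall>N. \<exists>t. t > K \<and> h t - t > N"
    using step_exists[OF hc hid unb] by blast
  then obtain nx where nx: "\<And>K N. nx K N > K \<and> h (nx K N) - nx K N > N"
    by metis
  define b where "b = rec_nat (nx 0 0) (\<lambda>n x. nx (max (3 * h x) (x + 1)) (real (Suc n)))"
  have b0: "b 0 = nx 0 0" by (simp add: b_def)
  have bS: "b (Suc n) = nx (max (3 * h (b n)) (b n + 1)) (real (Suc n))" for n
    by (simp add: b_def)
  have inc: "b (Suc n) > b n + 1" and gt3: "b (Suc n) > 3 * h (b n)" for n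
    using nx[of "max (3 * h (b n)) (b n + 1)" "real (Suc n)"] by (auto simp: bS)
  have hb: "h (b n) - b n > real n" for n
    using nx by (cases n) (auto simp: b0 bS)
  have bn: "b n \<ge> real n" for n
  proof (induction n)
    case 0 then show ?case using nx[of 0 0] b0 by auto
  next
    case (Suc n) then show ?case using inc[of n] by auto
  qed
  have inc2: "b n < b (Suc n)" for n using inc[of n] by linarith
  have sm: "strict_mono b"
    using inc2 strict_mono_Suc_iff by blast
  have l1: "filterlim b at_top sequentially"
    by (rule filterlim_at_top_mono[OF filterlim_real_sequentially]) (use bn in auto)
  have l2: "filterlim (\<lambda>n. h (b n) - b n) at_top sequentially"
    by (rule filterlim_at_top_mono[OF filterlim_real_sequentially]) (intro always_eventually allI less_imp_le hb)
  show ?thesis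
    by (rule exI[of _ b]) (intro conjI sm l1 l2 allI gt3)
qed

theorem lemma3p1:
  fixes f :: "real \<Rightarrow> real"
  assumes "f \<in> P_plus"
    and "\<not> (\<exists>C. \<forall>t. \<bar>f t - t\<bar> \<le> C)"
  shows "\<exists>b :: nat \<Rightarrow> real.
           (strict_mono b \<or> (\<forall>m n. m < n \<longrightarrow> b n < b m)) \<and>
           ((filterlim b at_top sequentially \<and> (\<forall>n. b (Suc n) > 3 * f (b n)) \<and>
               filterlim (\<lambda>n. f (b n) - b n) at_top sequentially)
            \<or>
            (filterlim b at_top sequentially \<and> (\<forall>n. b (Suc n) > 3 * inv f (b n)) \<and>
               filterlim (\<lambda>n. inv f (b n) - b n) at_top sequentially))"
proof -
  from assms(1) obtain g c where hom: "homeomorphism UNIV UNIV f g" and fid: "\<forall>t\<le>c. f t = t"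
    unfolding P_plus_def pl_homeo_def id_near_minus_infty_def by blast
  have gf: "g (f x) = x" and fg: "f (g x) = x" for x
    using hom unfolding homeomorphism_def by auto
  have fc: "continuous_on UNIV f" and gc: "continuous_on UNIV g"
    using hom unfolding homeomorphism_def by auto
  have invf: "inv f = g"
  proof
    fix y
    have injf: "inj f" by (rule injI) (metis gf)
    show "inv f y = g y"
      by (rule inv_f_eq[OF injf fg])
  qed
  have gid: "\<forall>t\<le>c. g t = t"
  proof (intro allI impI)
    fix t :: real assume "t \<le> c"
    then have "f t = t" using fid by blast
    then show "g t = t" using gf[of t] by simp
  qed
  show ?thesis
  proof (cases "\<exists>C. \<forall>t. f t - t \<le> C")
    case False
    obtain b where b: "strict_mono b" "filterlim b at_top sequentially"
     "\<forall>n. b (Suc n) > 3 * f (b n)" "filterlim (\<lambda>n. f (b n) - b n) at_top sequentially"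
      using seq_exists[OF fc fid False] by blast
    show ?thesis
      by (rule exI[of _ b]) (use b in blast)
  next
    case True
    then obtain C1 where C1: "\<forall>t. f t - t \<le> C1" by blast
    have "\<not> (\<exists>C. \<forall>t. g t - t \<le> C)"
    proof
      assume "\<exists>C. \<forall>t. g t - t \<le> C"
      then obtain C2 where C2: "\<forall>t. g t - t \<le> C2" by blast
      have "\<forall>t. \<bar>f t - t\<bar> \<le> max C1 C2"
      proof
        fix t
        have "g (f t) - f t \<le> C2" using C2 by blast
        then have "t - f t \<le> C2" using gf by simp
        then show "\<bar>f t - t\<bar> \<le> max C1 C2" using C1[rule_format, of t] by auto
      qed
      then show False using assms(2) by blast
    qed
    then obtain b where b: "strict_mono b" "filterlim b at_top sequentially"
     "\<forall>n. b (Suc n) > 3 * g (b n)" "filterlim (\<lambda>n. g (b n) - b n) at_top sequentially"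
      using seq_exists[OF gc gid] by blast
    show ?thesis unfolding invf
      by (rule exI[of _ b]) (use b in blast)
  qed
qed

end
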